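(* Let $n\geq 3$. There exists an $(S_1\times S_{n-1})$-equivariant acyclic matching on the face poset of $\Delta(\overline{\Pi}_n)$ such that the set of critical simplices is $C_n\cup\{\alpha_n\}$.
   Context: $\Pi_n$ is the poset of all set partitions of $[n]=\{1,\dots,n\}$ ordered by refinement (finer is smaller), and $\overline{\Pi}_n$ is obtained by removing the minimum $\{\{1\},\dots,\{n\}\}$ and maximum $\{[n]\}$. $\Delta(\overline{\Pi}_n)$ is its nerve (order complex): its simplices are the nonempty chains $x_0<x_1<\dots<x_k$ of $\overline{\Pi}_n$ (of dimension $k$), and its face poset is the set of these simplices ordered by inclusion. $S_n$ acts on $[n]$, hence on $\overline{\Pi}_n$ and on $\Delta(\overline{\Pi}_n)$; $S_1\times S_{n-1}=\{\sigma\in S_n\mid\sigma(1)=1\}$. Let $A$ be the set of partitions in $\overline{\Pi}_n$ in which every block not containing $1$ is a singleton; $C_n$ is the set of simplices of dimension $n-3$ all of whose vertices lie in $A$; $\alpha_n$ is the vertex (0-simplex) $\{\{1\},\{2,\dots,n\}\}$. A partial matching on a poset is a set of pairs $(a,b)$ with $b$ covering $a$ such that each element lies in at most one pair; it is acyclic if there is no cycle $b_1>a_1<b_2>a_2<\dots<b_t>a_t<b_1$, $t\ge2$, with distinct $b_i$ and $(a_i,b_i)$ in the matching; critical elements are the unmatched ones; a matching is $H$-equivariant if $(a,b)$ in it implies $(ha,hb)$ in it for all $h\in H$. *)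

theory Defs
  imports "HOL-Library.Disjoint_Sets" "HOL-Combinatorics.Permutations"
begin

type_synonym partition = "nat set set"
type_synonym simplex = "nat set set set"

definition refines :: "partition \<Rightarrow> partition \<Rightarrow> bool" where
  "refines P Q \<longleftrightarrow> (\<forall>B\<in>P. \<exists>C\<in>Q. B \<subseteq> C)"

definition Pi_bar :: "nat \<Rightarrow> partition set" where
  "Pi_bar n = {P. partition_on {1..n} P \<and> P \<noteq> (\<lambda>i. {i}) ` {1..n} \<and> P \<noteq> {{1..n}}}"

definition simplices :: "nat \<Rightarrow> simplex set" where
  "simplices n = {S. S \<noteq> {} \<and> finite S \<and> S \<subseteq> Pi_bar n \<and>
                     (\<forall>P\<in>S. \<forall>Q\<in>S. refines P Q \<or> refines Q P)}"

definition dim :: "simplex \<Rightarrow> nat" where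
  "dim S = card S - 1"

definition A_set :: "nat \<Rightarrow> partition set" where
  "A_set n = {P \<in> Pi_bar n. \<forall>B\<in>P. 1 \<notin> B \<longrightarrow> card B = 1}"

definition C_set :: "nat \<Rightarrow> simplex set" where
  "C_set n = {S \<in> simplices n. card S = n - 2 \<and> S \<subseteq> A_set n}"

definition alpha :: "nat \<Rightarrow> simplex" where
  "alpha n = {{{1}, {2..n}}}"

definition covers :: "'a set \<Rightarrow> ('a \<Rightarrow> 'a \<Rightarrow> bool) \<Rightarrow> 'a \<Rightarrow> 'a \<Rightarrow> bool" where
  "covers X lt a b \<longleftrightarrow> a \<in> X \<and> b \<in> X \<and> lt a b \<and> \<not> (\<exists>c\<in>X. lt a c \<and> lt c b)"

definition partial_matching :: "'a set \<Rightarrow> ('a \<Rightarrow> 'a \<Rightarrow> bool) \<Rightarrow> ('a \<times> 'a) set \<Rightarrow> bool" where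
  "partial_matching X lt M \<longleftrightarrow>
     (\<forall>(a,b)\<in>M. covers X lt a b) \<and>
     (\<forall>p\<in>M. \<forall>q\<in>M. p \<noteq> q \<longrightarrow> {fst p, snd p} \<inter> {fst q, snd q} = {})"

definition acyclic_matching :: "'a set \<Rightarrow> ('a \<Rightarrow> 'a \<Rightarrow> bool) \<Rightarrow> ('a \<times> 'a) set \<Rightarrow> bool" where
  "acyclic_matching X lt M \<longleftrightarrow> partial_matching X lt M \<and>
     \<not> (\<exists>(t::nat) (a::nat \<Rightarrow> 'a) (b::nat \<Rightarrow> 'a). t \<ge> 2 \<and> inj_on b {..<t} \<and>
          (\<forall>i<t. (a i, b i) \<in> M \<and> lt (a i) (b (Suc i mod t))))"

definition critical :: "'a set \<Rightarrow> ('a \<times> 'a) set \<Rightarrow> 'a set" where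
  "critical X M = {x \<in> X. \<forall>p\<in>M. x \<noteq> fst p \<and> x \<noteq> snd p}"

definition stab1 :: "nat \<Rightarrow> (nat \<Rightarrow> nat) set" where
  "stab1 n = {\<sigma>. \<sigma> permutes {1..n} \<and> \<sigma> 1 = 1}"

definition act_simplex :: "(nat \<Rightarrow> nat) \<Rightarrow> simplex \<Rightarrow> simplex" where
  "act_simplex \<sigma> S = (\<lambda>P. (\<lambda>B. \<sigma> ` B) ` P) ` S"

end

theory Submission
  imports Defs
begin


definition blk :: "partition \<Rightarrow> nat set" where
  "blk P = \<Union>{B\<in>P. 1 \<in> B}"

lemma refines_trans: "refines P Q \<Longrightarrow> refines Q R \<Longrightarrow> refines P R"
  unfolding refines_def by (meson order_trans)

lemma refines_refl': "refines P P"
  unfolding refines_def by auto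

lemma part_disj: "partition_on X P \<Longrightarrow> D \<in> P \<Longrightarrow> E \<in> P \<Longrightarrow> D \<noteq> E \<Longrightarrow> D \<inter> E = {}"
  by (metis disjointD partition_onD2)

lemma part_ne: "partition_on X P \<Longrightarrow> D \<in> P \<Longrightarrow> D \<noteq> {}"
  using partition_onD3 by metis

lemma part_sub: "partition_on X P \<Longrightarrow> D \<in> P \<Longrightarrow> D \<subseteq> X"
  using partition_onD1 by blast

lemma part_cover: "partition_on X P \<Longrightarrow> x \<in> X \<Longrightarrow> \<exists>D\<in>P. x \<in> D"
  using partition_onD1 by blast

lemma part_same: "partition_on X P \<Longrightarrow> D \<in> P \<Longrightarrow> E \<in> P \<Longrightarrow> x \<in> D \<Longrightarrow> x \<in> E \<Longrightarrow> D = E"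
  using part_disj by blast

lemma blk_eq: "partition_on X P \<Longrightarrow> D \<in> P \<Longrightarrow> 1 \<in> D \<Longrightarrow> blk P = D"
proof -
  assume a: "partition_on X P" "D \<in> P" "1 \<in> D"
  have "{B\<in>P. 1 \<in> B} = {D}" using a part_same[OF a(1)] by blast
  thus ?thesis unfolding blk_def by simp
qed

lemma blk_in: "partition_on X P \<Longrightarrow> 1 \<in> X \<Longrightarrow> blk P \<in> P \<and> 1 \<in> blk P"
proof -
  assume a: "partition_on X P" "1 \<in> X"
  obtain D where "D \<in> P" "1 \<in> D" using part_cover[OF a] by blast
  thus ?thesis using blk_eq[OF a(1)] by auto
qed

lemma refines_sub:
  assumes p': "partition_on X P'" and r1: "refines P' Q'" and r2: "refines Q' P'"
  shows "P' \<subseteq> Q'"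
proof
  fix B assume B: "B \<in> P'"
  then obtain C where C: "C \<in> Q'" "B \<subseteq> C" using r1 unfolding refines_def by blast
  then obtain B' where B': "B' \<in> P'" "C \<subseteq> B'" using r2 unfolding refines_def by blast
  have "B \<noteq> {}" using part_ne[OF p' B] .
  have "B \<inter> B' \<noteq> {}" using \<open>B \<noteq> {}\<close> C(2) B'(2) by blast
  then have "B = B'" using part_disj[OF p' B B'(1)] by blast
  then show "B \<in> Q'" using C B' by auto
qed

lemma refines_antisym:
  assumes p: "partition_on X P" and q: "partition_on X Q" and pq: "refines P Q" and qp: "refines Q P"
  shows "P = Q"
  using refines_sub[OF p pq qp] refines_sub[OF q qp pq] by blast

lemma blk_mono: "partition_on X P \<Longrightarrow> partition_on X Q \<Longrightarrow> 1 \<in> X \<Longrightarrow> refines P Q \<Longrightarrow> blk P \<subseteq> blk Q"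
proof -
  assume a: "partition_on X P" "partition_on X Q" "1 \<in> X" "refines P Q"
  obtain C where "C \<in> Q" "blk P \<subseteq> C" using a(4) blk_in[OF a(1,3)] unfolding refines_def by blast
  thus ?thesis using blk_eq[OF a(2)] blk_in[OF a(1,3)] by blast
qed

lemma blk_full: "partition_on X P \<Longrightarrow> 1 \<in> X \<Longrightarrow> blk P = X \<Longrightarrow> P = {X}"
proof -
  assume a: "partition_on X P" "1 \<in> X" "blk P = X"
  have "X \<in> P" using blk_in[OF a(1,2)] a(3) by simp
  moreover have "D = X" if "D \<in> P" for D
    using part_disj[OF a(1) that \<open>X \<in> P\<close>] part_sub[OF a(1) that] part_ne[OF a(1) that] by blast
  ultimately show ?thesis by blast
qed

lemma all_single: "partition_on X P \<Longrightarrow> (\<forall>D\<in>P. card D = 1) \<Longrightarrow> P = (\<lambda>i. {i}) ` X"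
proof -
  assume a: "partition_on X P" "\<forall>D\<in>P. card D = 1"
  show ?thesis
  proof
    show "P \<subseteq> (\<lambda>i. {i}) ` X"
    proof
      fix D assume "D \<in> P"
      then obtain d where "D = {d}" using a(2) card_1_singletonE by blast
      thus "D \<in> (\<lambda>i. {i}) ` X" using part_sub[OF a(1) \<open>D \<in> P\<close>] by auto
    qed
    show "(\<lambda>i. {i}) ` X \<subseteq> P"
    proof
      fix E assume "E \<in> (\<lambda>i. {i}) ` X"
      then obtain x where x: "x \<in> X" "E = {x}" by blast
      then obtain D where "D \<in> P" "x \<in> D" using part_cover[OF a(1)] by blast
      then obtain d where "D = {d}" using a(2) card_1_singletonE by blast
      thus "E \<in> P" using x \<open>D \<in> P\<close> \<open>x \<in> D\<close> by auto
    qed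
  qed
qed


definition segm :: "nat \<Rightarrow> simplex \<Rightarrow> partition set" where
  "segm n S = {P \<in> S \<inter> A_set n. \<forall>k\<in>{2..card (blk P)}. \<exists>Q\<in>S \<inter> A_set n. card (blk Q) = k \<and> blk Q \<subseteq> blk P}"

definition Bs :: "nat \<Rightarrow> simplex \<Rightarrow> nat set" where
  "Bs n S = insert 1 (\<Union>(blk ` segm n S))"

definition Hs :: "nat \<Rightarrow> simplex \<Rightarrow> partition set" where
  "Hs n S = {P \<in> S. Bs n S \<subset> blk P}"

definition minH :: "partition set \<Rightarrow> partition" where
  "minH X = (THE P. P \<in> X \<and> (\<forall>Q\<in>X. refines P Q))"

definition bB :: "nat \<Rightarrow> nat set \<Rightarrow> partition" where
  "bB n B = {B, {1..n} - B}"

definition cc :: "nat set \<Rightarrow> partition \<Rightarrow> partition" where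
  "cc B h = insert B (insert (blk h - B) (h - {blk h}))"

definition vv :: "nat \<Rightarrow> simplex \<Rightarrow> partition" where
  "vv n S = (if n \<le> card (Bs n S) + 1 then {} else if Hs n S = {} then bB n (Bs n S)
             else cc (Bs n S) (minH (Hs n S)))"

definition MM :: "nat \<Rightarrow> (simplex \<times> simplex) set" where
  "MM n = {(a,b). a \<in> simplices n \<and> b \<in> simplices n \<and> vv n b \<in> b \<and> a = b - {vv n b} \<and> vv n a = vv n b}"

lemma segm_sub: "segm n S \<subseteq> S \<inter> A_set n"
  unfolding segm_def by auto

lemma segm_mono: "S \<subseteq> S' \<Longrightarrow> segm n S \<subseteq> segm n S'"
  unfolding segm_def by (smt (verit, best) Collect_mono_iff IntE IntI subsetD)

lemma segm_cong: "S \<inter> A_set n = S' \<inter> A_set n \<Longrightarrow> segm n S = segm n S'"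
  unfolding segm_def by auto

lemma Bs_mono: "S \<subseteq> S' \<Longrightarrow> Bs n S \<subseteq> Bs n S'"
  unfolding Bs_def using segm_mono[of S S' n] by auto

lemma Bs_cong: "S \<inter> A_set n = S' \<inter> A_set n \<Longrightarrow> Bs n S = Bs n S'"
  unfolding Bs_def using segm_cong by metis

lemma Bs_empty: "segm n S = {} \<Longrightarrow> Bs n S = {1}"
  unfolding Bs_def by simp

lemma one_Bs: "1 \<in> Bs n S"
  unfolding Bs_def by simp

lemma finite_chain_max:
  assumes "finite F" "F \<noteq> {}" "\<forall>x\<in>F. \<forall>y\<in>F. x \<subseteq> y \<or> y \<subseteq> x"
  shows "\<exists>m\<in>F. \<forall>x\<in>F. x \<subseteq> (m::'a set)"
  using assms
proof (induction F rule: finite_ne_induct)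
  case (singleton x) then show ?case by auto
next
  case (insert x F)
  then obtain m where m: "m \<in> F" "\<forall>y\<in>F. y \<subseteq> m" by auto
  show ?case
  proof (cases "x \<subseteq> m")
    case True then show ?thesis using m by auto
  next
    case False
    then have "m \<subseteq> x" using insert.prems m by auto
    then show ?thesis using m by auto
  qed
qed

lemma finite_chain_min:
  assumes "finite X" "X \<noteq> {}" "\<forall>P\<in>X. \<forall>Q\<in>X. refines P Q \<or> refines Q P"
  shows "\<exists>m\<in>X. \<forall>Q\<in>X. refines m Q"
  using assms
proof (induction X rule: finite_ne_induct)
  case (singleton x) then show ?case by (auto simp: refines_refl')
next
  case (insert x F)
  then obtain m where m: "m \<in> F" "\<forall>y\<in>F. refines m y" by auto
  show ?case
  proof (cases "refines m x")
    case True then show ?thesis using m by auto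
  next
    case False
    then have "refines x m" using insert.prems m by auto
    then show ?thesis using m refines_refl' refines_trans[of x m] by auto
  qed
qed

locale L3 =
  fixes n :: nat
  assumes n3: "3 \<le> n"
begin

lemma one_N: "(1::nat) \<in> {1..n}" using n3 by auto

lemma pb: "P \<in> Pi_bar n \<Longrightarrow> partition_on {1..n} P"
  unfolding Pi_bar_def by auto

lemma pb_not_disc: "P \<in> Pi_bar n \<Longrightarrow> P \<noteq> (\<lambda>i. {i}) ` {1..n}"
  unfolding Pi_bar_def by auto

lemma pb_not_top: "P \<in> Pi_bar n \<Longrightarrow> P \<noteq> {{1..n}}"
  unfolding Pi_bar_def by auto

lemma pb_blk: "P \<in> Pi_bar n \<Longrightarrow> blk P \<in> P \<and> 1 \<in> blk P"
  using blk_in[OF pb one_N] .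

lemma pb_blk_eq: "P \<in> Pi_bar n \<Longrightarrow> D \<in> P \<Longrightarrow> 1 \<in> D \<Longrightarrow> blk P = D"
  using blk_eq[OF pb] .

lemma pb_sub: "P \<in> Pi_bar n \<Longrightarrow> D \<in> P \<Longrightarrow> D \<subseteq> {1..n}"
  using part_sub[OF pb] .

lemma pb_disj: "P \<in> Pi_bar n \<Longrightarrow> D \<in> P \<Longrightarrow> E \<in> P \<Longrightarrow> D \<noteq> E \<Longrightarrow> D \<inter> E = {}"
  using part_disj[OF pb] .

lemma pb_ne: "P \<in> Pi_bar n \<Longrightarrow> D \<in> P \<Longrightarrow> D \<noteq> {}"
  using part_ne[OF pb] .

lemma pb_blk_sub: "P \<in> Pi_bar n \<Longrightarrow> blk P \<subseteq> {1..n}"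
  using pb_sub pb_blk by metis

lemma pb_blk_ne: "P \<in> Pi_bar n \<Longrightarrow> blk P \<noteq> {1..n}"
  using blk_full[OF pb one_N] pb_not_top by blast

lemma pb_blk_card: "P \<in> Pi_bar n \<Longrightarrow> card (blk P) < n"
proof -
  assume a: "P \<in> Pi_bar n"
  have "blk P \<subset> {1..n}" using pb_blk_sub[OF a] pb_blk_ne[OF a] by blast
  then show ?thesis using psubset_card_mono[of "{1..n}" "blk P"] by simp
qed

lemma pb_blk_fin: "P \<in> Pi_bar n \<Longrightarrow> finite (blk P)"
  using pb_blk_sub finite_subset by (metis finite_atLeastAtMost)

lemma pb_mono: "P \<in> Pi_bar n \<Longrightarrow> Q \<in> Pi_bar n \<Longrightarrow> refines P Q \<Longrightarrow> blk P \<subseteq> blk Q"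
  using blk_mono[OF pb pb one_N] .

lemma A_pb: "P \<in> A_set n \<Longrightarrow> P \<in> Pi_bar n"
  unfolding A_set_def by auto

lemma A_single: "P \<in> A_set n \<Longrightarrow> D \<in> P \<Longrightarrow> 1 \<notin> D \<Longrightarrow> card D = 1"
  unfolding A_set_def by auto

lemma A_card: "P \<in> A_set n \<Longrightarrow> 2 \<le> card (blk P)"
proof (rule ccontr)
  assume a: "P \<in> A_set n" "\<not> 2 \<le> card (blk P)"
  have pP: "P \<in> Pi_bar n" using A_pb[OF a(1)] .
  have "blk P \<noteq> {}" using pb_blk[OF pP] by blast
  then have "card (blk P) > 0" using pb_blk_fin[OF pP] card_gt_0_iff by blast
  then have c1: "card (blk P) = 1" using a(2) by linarith
  have "\<forall>D\<in>P. card D = 1"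
  proof
    fix D assume D: "D \<in> P"
    show "card D = 1"
    proof (cases "1 \<in> D")
      case True then show ?thesis using pb_blk_eq[OF pP D] c1 by simp
    next
      case False then show ?thesis using A_single[OF a(1) D] by simp
    qed
  qed
  then show False using all_single[OF pb[OF pP]] pb_not_disc[OF pP] by blast
qed

lemma A_det: "P \<in> A_set n \<Longrightarrow> Q \<in> A_set n \<Longrightarrow> blk P = blk Q \<Longrightarrow> P = Q"
proof -
  have *: "P' \<subseteq> Q'" if a: "P' \<in> A_set n" "Q' \<in> A_set n" "blk P' = blk Q'" for P' Q'
  proof
    fix D assume D: "D \<in> P'"
    have pP: "P' \<in> Pi_bar n" and pQ: "Q' \<in> Pi_bar n" using A_pb a by auto
    show "D \<in> Q'"
    proof (cases "1 \<in> D")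
      case True
      then show ?thesis using pb_blk_eq[OF pP D] a(3) pb_blk[OF pQ] by auto
    next
      case False
      then have "card D = 1" using A_single[OF a(1) D] by simp
      then obtain d where d: "D = {d}" using card_1_singletonE by blast
      have "d \<in> {1..n}" using pb_sub[OF pP D] d by auto
      then obtain E where E: "E \<in> Q'" "d \<in> E" using part_cover[OF pb[OF pQ]] by blast
      have "d \<notin> blk P'" using pb_disj[OF pP D, of "blk P'"] pb_blk[OF pP] False d by auto
      then have "E \<noteq> blk Q'" using E a(3) by auto
      then have "1 \<notin> E" using pb_blk_eq[OF pQ E(1)] by auto
      then have "card E = 1" using A_single[OF a(2) E(1)] by simp
      then have "E = {d}" using E(2) by (metis card_1_singletonE singletonD)
      then show ?thesis using E d by simp
    qed
  qed
  assume "P \<in> A_set n" "Q \<in> A_set n" "blk P = blk Q"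
  then show ?thesis using *[of P Q] *[of Q P] by auto
qed

lemma sx: "S \<in> simplices n \<Longrightarrow> S \<subseteq> Pi_bar n \<and> finite S \<and> S \<noteq> {}"
  unfolding simplices_def by auto

lemma sx_cmp: "S \<in> simplices n \<Longrightarrow> P \<in> S \<Longrightarrow> Q \<in> S \<Longrightarrow> refines P Q \<or> refines Q P"
  unfolding simplices_def by auto

lemma sx_pb: "S \<in> simplices n \<Longrightarrow> P \<in> S \<Longrightarrow> P \<in> Pi_bar n"
  using sx by (meson subsetD)

lemma sx_blk: "S \<in> simplices n \<Longrightarrow> P \<in> S \<Longrightarrow> Q \<in> S \<Longrightarrow> blk P \<subseteq> blk Q \<or> blk Q \<subseteq> blk P"
proof -
  assume a: "S \<in> simplices n" "P \<in> S" "Q \<in> S"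
  have p: "P \<in> Pi_bar n" and q: "Q \<in> Pi_bar n" using sx_pb[OF a(1)] a(2,3) by auto
  show ?thesis using sx_cmp[OF a] pb_mono[OF p q] pb_mono[OF q p] by auto
qed

lemma segm_S: "S \<in> simplices n \<Longrightarrow> P \<in> segm n S \<Longrightarrow> P \<in> S"
  using segm_sub by auto

lemma segm_A: "P \<in> segm n S \<Longrightarrow> P \<in> A_set n"
  using segm_sub by auto

lemma Bs_max:
  assumes S: "S \<in> simplices n" and ne: "segm n S \<noteq> {}"
  shows "\<exists>s\<in>segm n S. blk s = Bs n S"
proof -
  have fin: "finite (segm n S)"
    using sx[OF S] segm_sub[of n S] finite_subset[of "segm n S" S] by auto
  have ch: "\<forall>x\<in>blk ` segm n S. \<forall>y\<in>blk ` segm n S. x \<subseteq> y \<or> y \<subseteq> x"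
  proof (intro ballI)
    fix x y assume "x \<in> blk ` segm n S" "y \<in> blk ` segm n S"
    then obtain P Q where "P \<in> segm n S" "Q \<in> segm n S" "x = blk P" "y = blk Q" by auto
    then show "x \<subseteq> y \<or> y \<subseteq> x" using sx_blk[OF S, of P Q] segm_S[OF S] by auto
  qed
  obtain m where m: "m \<in> blk ` segm n S" "\<forall>x\<in>blk ` segm n S. x \<subseteq> m"
    using finite_chain_max[of "blk ` segm n S", OF _ _ ch] fin ne by auto
  then obtain s where s: "s \<in> segm n S" "m = blk s" by auto
  have "1 \<in> blk s" using pb_blk[OF sx_pb[OF S segm_S[OF S s(1)]]] by simp
  have "\<Union>(blk ` segm n S) = blk s" using m s by auto
  then have "Bs n S = blk s" unfolding Bs_def using \<open>1 \<in> blk s\<close> by auto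
  then show ?thesis using s by auto
qed

lemma Bs_sub: "S \<in> simplices n \<Longrightarrow> Bs n S \<subseteq> {1..n}"
proof -
  assume S: "S \<in> simplices n"
  have "blk P \<subseteq> {1..n}" if "P \<in> segm n S" for P
    using that pb_blk_sub sx_pb[OF S] segm_sub by (metis IntE subsetD)
  then show ?thesis unfolding Bs_def using one_N by auto
qed

lemma Bs_fin: "S \<in> simplices n \<Longrightarrow> finite (Bs n S)"
  using Bs_sub finite_subset by (metis finite_atLeastAtMost)

lemma segm_blk: "S \<in> simplices n \<Longrightarrow> P \<in> segm n S \<Longrightarrow> blk P \<subseteq> Bs n S"
  unfolding Bs_def by auto

lemma NoNext:
  assumes S: "S \<in> simplices n" and h: "h \<in> S" "h \<in> A_set n" and sub: "Bs n S \<subseteq> blk h"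
    and cd: "card (blk h) = card (Bs n S) + 1"
  shows False
proof -
  have hseg: "h \<in> segm n S"
    unfolding segm_def
  proof (intro CollectI conjI ballI)
    show "h \<in> S \<inter> A_set n" using h by simp
    fix k assume k: "k \<in> {2..card (blk h)}"
    show "\<exists>Q\<in>S \<inter> A_set n. card (blk Q) = k \<and> blk Q \<subseteq> blk h"
    proof (cases "k = card (blk h)")
      case True then show ?thesis using h by auto
    next
      case False
      then have kb: "k \<le> card (Bs n S)" "2 \<le> k" using k cd by auto
      have "segm n S \<noteq> {}"
      proof
        assume "segm n S = {}"
        then have "card (Bs n S) = 1" using Bs_empty by simp
        then show False using kb by simp
      qed
      then obtain s where s: "s \<in> segm n S" "blk s = Bs n S" using Bs_max[OF S] by blast
      then have "k \<in> {2..card (blk s)}" using kb by simp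
      then obtain Q where "Q \<in> S \<inter> A_set n" "card (blk Q) = k" "blk Q \<subseteq> blk s"
        using s(1) unfolding segm_def by blast
      then show ?thesis using s(2) sub by blast
    qed
  qed
  have "blk h \<subseteq> Bs n S" using segm_blk[OF S hseg] .
  then have "card (blk h) \<le> card (Bs n S)" using card_mono Bs_fin[OF S] by blast
  then show False using cd by simp
qed

end


context L3 begin

lemma compat:
  assumes S: "S \<in> simplices n" and P: "P \<in> S" and nh: "\<not> Bs n S \<subset> blk P"
  shows "\<forall>D\<in>P. D \<subseteq> Bs n S \<or> D \<inter> Bs n S = {}"
proof
  fix D assume D: "D \<in> P"
  have pP: "P \<in> Pi_bar n" using sx_pb[OF S P] .
  show "D \<subseteq> Bs n S \<or> D \<inter> Bs n S = {}"
  proof (cases "segm n S = {}")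
    case True
    then have B: "Bs n S = {1}" using Bs_empty by simp
    show ?thesis
    proof (cases "1 \<in> D")
      case True
      then have "D = blk P" using pb_blk_eq[OF pP D] by simp
      moreover have "1 \<in> blk P" using pb_blk[OF pP] by simp
      ultimately have "D = {1}" using nh B by auto
      then show ?thesis using B by simp
    next
      case False then show ?thesis using B by auto
    qed
  next
    case False
    then obtain s where s: "s \<in> segm n S" "blk s = Bs n S" using Bs_max[OF S] by blast
    have sS: "s \<in> S" using segm_S[OF S s(1)] .
    have ps: "s \<in> Pi_bar n" using sx_pb[OF S sS] .
    show ?thesis
    proof (cases "refines P s")
      case True
      then obtain F where F: "F \<in> s" "D \<subseteq> F" using D unfolding refines_def by auto
      show ?thesis
      proof (cases "F = blk s")
        case True then show ?thesis using F s(2) by auto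
      next
        case False
        then have "F \<inter> blk s = {}" using pb_disj[OF ps F(1), of "blk s"] pb_blk[OF ps] by auto
        then show ?thesis using F s(2) by auto
      qed
    next
      case False
      then have "refines s P" using sx_cmp[OF S P sS] by auto
      then have "blk s \<subseteq> blk P" using pb_mono[OF ps pP] by auto
      then have eq: "blk P = Bs n S" using nh s(2) by auto
      show ?thesis
      proof (cases "D = blk P")
        case True then show ?thesis using eq by auto
      next
        case False
        then have "D \<inter> blk P = {}" using pb_disj[OF pP D, of "blk P"] pb_blk[OF pP] by auto
        then show ?thesis using eq by auto
      qed
    qed
  qed
qed

lemma minH_props:
  assumes S: "S \<in> simplices n" and X: "X \<subseteq> S" "X \<noteq> {}"
  shows "minH X \<in> X \<and> (\<forall>Q\<in>X. refines (minH X) Q)"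
proof -
  have fin: "finite X" using sx[OF S] X(1) finite_subset by metis
  have ch: "\<forall>P\<in>X. \<forall>Q\<in>X. refines P Q \<or> refines Q P"
  proof (intro ballI)
    fix P Q assume "P \<in> X" "Q \<in> X"
    then show "refines P Q \<or> refines Q P" using sx_cmp[OF S] X(1) by (meson subsetD)
  qed
  obtain m where m: "m \<in> X" "\<forall>Q\<in>X. refines m Q" using finite_chain_min[OF fin X(2) ch] by blast
  have uq: "m' = m" if m': "m' \<in> X" "\<forall>Q\<in>X. refines m' Q" for m'
  proof -
    have a: "m' \<in> Pi_bar n" using sx_pb[OF S] X(1) m'(1) by (meson subsetD)
    have b: "m \<in> Pi_bar n" using sx_pb[OF S] X(1) m(1) by (meson subsetD)
    have "refines m' m" using m'(2) m(1) by blast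
    moreover have "refines m m'" using m(2) m'(1) by blast
    ultimately show ?thesis using refines_antisym[OF pb[OF a] pb[OF b]] by blast
  qed
  have "minH X = m" unfolding minH_def
  proof (rule the_equality)
    show "m \<in> X \<and> (\<forall>Q\<in>X. refines m Q)" using m by blast
    show "\<And>P. P \<in> X \<and> (\<forall>Q\<in>X. refines P Q) \<Longrightarrow> P = m" using uq by blast
  qed
  then show ?thesis using m by simp
qed

lemma bB_part:
  assumes B: "1 \<in> B" "B \<subseteq> {1..n}" "card B + 1 < n"
  shows "bB n B \<in> Pi_bar n" "bB n B \<notin> A_set n" "blk (bB n B) = B"
proof -
  have fB: "finite B" using B(2) finite_subset by auto
  have cN: "card ({1..n} - B) = n - card B" using card_Diff_subset[OF fB B(2)] by simp
  then have cN2: "card ({1..n} - B) \<ge> 2" using B(3) by simp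
  have ne: "{1..n} - B \<noteq> {}"
  proof
    assume e: "{1..n} - B = {}"
    have "card ({1..n} - B) = 0" unfolding e by simp
    then show False using cN2 by linarith
  qed
  have neq: "B \<noteq> {1..n} - B" using B(1) by auto
  have part: "partition_on {1..n} (bB n B)"
    unfolding bB_def
    by (rule partition_onI) (use B ne in \<open>auto simp: disjnt_def\<close>)
  have "B \<noteq> {1..n}" using B(3) by auto
  then have nt: "bB n B \<noteq> {{1..n}}" unfolding bB_def by auto
  have nd: "bB n B \<noteq> (\<lambda>i. {i}) ` {1..n}"
  proof
    assume "bB n B = (\<lambda>i. {i}) ` {1..n}"
    then have "{1..n} - B \<in> (\<lambda>i. {i}) ` {1..n}" unfolding bB_def by auto
    then show False using cN2 by auto
  qed
  show pbB: "bB n B \<in> Pi_bar n" unfolding Pi_bar_def using part nt nd by auto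
  show "bB n B \<notin> A_set n"
  proof
    assume "bB n B \<in> A_set n"
    moreover have "{1..n} - B \<in> bB n B" "1 \<notin> {1..n} - B" unfolding bB_def using B by auto
    ultimately have "card ({1..n} - B) = 1" using A_single by blast
    then show False using cN2 by simp
  qed
  show "blk (bB n B) = B" using pb_blk_eq[OF pbB, of B] B(1) unfolding bB_def by auto
qed

lemma compat_bB:
  assumes P: "P \<in> Pi_bar n" and c: "\<forall>D\<in>P. D \<subseteq> B \<or> D \<inter> B = {}"
  shows "refines P (bB n B)"
  unfolding refines_def bB_def
proof
  fix D assume D: "D \<in> P"
  have "D \<subseteq> {1..n}" using pb_sub[OF P D] .
  then show "\<exists>C\<in>{B, {1..n} - B}. D \<subseteq> C" using c D by auto
qed

lemma compat_cc:
  assumes P: "P \<in> Pi_bar n" and c: "\<forall>D\<in>P. D \<subseteq> B \<or> D \<inter> B = {}"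
    and r: "refines P h"
  shows "refines P (cc B h)"
  unfolding refines_def
proof
  fix D assume D: "D \<in> P"
  then obtain E where E: "E \<in> h" "D \<subseteq> E" using r unfolding refines_def by blast
  show "\<exists>C\<in>cc B h. D \<subseteq> C"
  proof (cases "E = blk h")
    case True
    then show ?thesis using c D E unfolding cc_def by auto
  next
    case False
    then show ?thesis using E unfolding cc_def by auto
  qed
qed

lemma cc_refines: "B \<subseteq> blk h \<Longrightarrow> blk h \<in> h \<Longrightarrow> refines (cc B h) h"
  unfolding refines_def cc_def by auto

end


context L3 begin

lemma cc_part:
  assumes h: "h \<in> Pi_bar n" and B: "1 \<in> B" "B \<subset> blk h"
  shows "partition_on {1..n} (cc B h)" "blk (cc B h) = B"
proof -
  have ph: "partition_on {1..n} h" using pb[OF h] .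
  have bh: "blk h \<in> h" using pb_blk[OF h] by simp
  have U: "\<Union>h = {1..n}" using partition_onD1[OF ph] by simp
  have dj: "\<And>E. E \<in> h \<Longrightarrow> E \<noteq> blk h \<Longrightarrow> E \<inter> blk h = {}" using pb_disj[OF h _ bh] by simp
  have dh: "\<And>E F. E \<in> h \<Longrightarrow> F \<in> h \<Longrightarrow> E \<noteq> F \<Longrightarrow> E \<inter> F = {}" using pb_disj[OF h] by simp
  have ne: "\<And>E. E \<in> h \<Longrightarrow> E \<noteq> {}" using pb_ne[OF h] by simp
  have U2: "\<Union>(cc B h) = \<Union>h"
  proof -
    have "\<Union>(cc B h) = B \<union> (blk h - B) \<union> \<Union>(h - {blk h})" unfolding cc_def by auto
    also have "\<dots> = blk h \<union> \<Union>(h - {blk h})" using B by auto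
    also have "\<dots> = \<Union>h" using bh by auto
    finally show ?thesis .
  qed
  show part: "partition_on {1..n} (cc B h)"
  proof (rule partition_onI)
    show "\<Union>(cc B h) = {1..n}" using U2 U by simp
    show "{} \<notin> cc B h" unfolding cc_def using B ne by auto
    fix p q assume p: "p \<in> cc B h" and q: "q \<in> cc B h" and pq: "p \<noteq> q"
    have sB: "B \<subseteq> blk h" using B by auto
    show "disjnt p q"
    proof -
      have pc: "p = B \<or> p = blk h - B \<or> (p \<in> h \<and> p \<noteq> blk h)" using p unfolding cc_def by auto
      have qc: "q = B \<or> q = blk h - B \<or> (q \<in> h \<and> q \<noteq> blk h)" using q unfolding cc_def by auto
      have "p \<inter> q = {}"
      proof (cases "p \<in> h \<and> p \<noteq> blk h")
        case pT: True
        then have pd: "p \<inter> blk h = {}" using dj by simp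
        show ?thesis
        proof (cases "q \<in> h \<and> q \<noteq> blk h")
          case True then show ?thesis using pT dh pq by simp
        next
          case False
          then have "q \<subseteq> blk h" using qc sB by auto
          then show ?thesis using pd by auto
        qed
      next
        case pF: False
        then have ps: "p \<subseteq> blk h" using pc sB by auto
        show ?thesis
        proof (cases "q \<in> h \<and> q \<noteq> blk h")
          case True
          then have "q \<inter> blk h = {}" using dj by simp
          then show ?thesis using ps by auto
        next
          case False
          then have "q = B \<or> q = blk h - B" using qc by auto
          moreover have "p = B \<or> p = blk h - B" using pc pF by auto
          ultimately show ?thesis using pq by auto
        qed
      qed
      then show ?thesis unfolding disjnt_def .
    qed
  qed
  show "blk (cc B h) = B" using blk_eq[OF part, of B] B(1) unfolding cc_def by auto
qed

lemma cc_bad: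
  assumes S: "S \<in> simplices n" and hS: "h \<in> S" and Bh: "Bs n S \<subset> blk h"
    and all: "\<forall>D\<in>cc (Bs n S) h. 1 \<notin> D \<longrightarrow> card D = 1"
  shows False
proof -
  let ?B = "Bs n S"
  have h: "h \<in> Pi_bar n" using sx_pb[OF S hS] .
  have c1: "card (blk h - ?B) = 1" using all one_Bs[of n S] unfolding cc_def by auto
  have hA: "h \<in> A_set n"
    unfolding A_set_def
  proof (intro CollectI conjI ballI impI)
    show "h \<in> Pi_bar n" using h .
    fix D assume D: "D \<in> h" "1 \<notin> D"
    then have "D \<noteq> blk h" using pb_blk[OF h] by auto
    then have "D \<in> cc ?B h" using D unfolding cc_def by auto
    then show "card D = 1" using all D by auto
  qed
  have fh: "finite (blk h)" using pb_blk_fin[OF h] .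
  have "card (blk h) = card ?B + card (blk h - ?B)"
    using card_Diff_subset[of ?B "blk h"] Bh fh finite_subset[of ?B "blk h"] card_mono[of "blk h" ?B] by auto
  then have "card (blk h) = card ?B + 1" using c1 by simp
  then show False using NoNext[OF S hS hA] Bh by auto
qed

lemma sx_insert:
  assumes S: "S \<in> simplices n" and v: "v \<in> Pi_bar n" and c: "\<forall>P\<in>S. refines P v \<or> refines v P"
  shows "insert v S \<in> simplices n"
  using S v c refines_refl' unfolding simplices_def by auto

lemma vv_props:
  assumes S: "S \<in> simplices n" and nle: "\<not> n \<le> card (Bs n S) + 1"
  shows "vv n S \<in> Pi_bar n \<and> vv n S \<notin> A_set n \<and> blk (vv n S) = Bs n S
         \<and> (\<forall>P\<in>S. refines P (vv n S) \<or> refines (vv n S) P)"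
proof (cases "Hs n S = {}")
  case True
  let ?B = "Bs n S"
  have v: "vv n S = bB n ?B" unfolding vv_def using True nle by auto
  have B: "1 \<in> ?B" "?B \<subseteq> {1..n}" "card ?B + 1 < n" using one_Bs Bs_sub[OF S] nle by auto
  have r: "\<forall>P\<in>S. refines P (bB n ?B)"
  proof
    fix P assume P: "P \<in> S"
    have "\<not> ?B \<subset> blk P" using True P unfolding Hs_def by auto
    then show "refines P (bB n ?B)" using compat_bB[OF sx_pb[OF S P] compat[OF S P]] by simp
  qed
  show ?thesis using bB_part[OF B] r v by auto
next
  case False
  let ?B = "Bs n S"
  let ?h = "minH (Hs n S)"
  have HS: "Hs n S \<subseteq> S" unfolding Hs_def by auto
  have hp: "?h \<in> Hs n S" "\<forall>Q\<in>Hs n S. refines ?h Q" using minH_props[OF S HS False] by auto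
  have hS: "?h \<in> S" and Bh: "?B \<subset> blk ?h" using hp(1) unfolding Hs_def by auto
  have h: "?h \<in> Pi_bar n" using sx_pb[OF S hS] .
  have v: "vv n S = cc ?B ?h" unfolding vv_def using False nle by auto
  have part: "partition_on {1..n} (cc ?B ?h)" and bv: "blk (cc ?B ?h) = ?B"
    using cc_part[OF h one_Bs Bh] by auto
  have nA: "\<not> (\<forall>D\<in>cc ?B ?h. 1 \<notin> D \<longrightarrow> card D = 1)" using cc_bad[OF S hS Bh] by blast
  have nd: "cc ?B ?h \<noteq> (\<lambda>i. {i}) ` {1..n}" using nA by auto
  have "?B \<noteq> {1..n}" using nle by auto
  then have nt: "cc ?B ?h \<noteq> {{1..n}}" unfolding cc_def by auto
  have pv: "cc ?B ?h \<in> Pi_bar n" unfolding Pi_bar_def using part nd nt by auto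
  have av: "cc ?B ?h \<notin> A_set n" using nA unfolding A_set_def by auto
  have r: "\<forall>P\<in>S. refines P (cc ?B ?h) \<or> refines (cc ?B ?h) P"
  proof
    fix P assume P: "P \<in> S"
    show "refines P (cc ?B ?h) \<or> refines (cc ?B ?h) P"
    proof (cases "P \<in> Hs n S")
      case True
      then have "refines ?h P" using hp(2) by blast
      moreover have "refines (cc ?B ?h) ?h" using cc_refines Bh pb_blk[OF h] by auto
      ultimately show ?thesis using refines_trans by blast
    next
      case False
      then have nh: "\<not> ?B \<subset> blk P" using P unfolding Hs_def by auto
      have pP: "P \<in> Pi_bar n" using sx_pb[OF S P] .
      have "refines P ?h"
      proof (rule ccontr)
        assume "\<not> refines P ?h"
        then have "refines ?h P" using sx_cmp[OF S P hS] by auto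
        then have "blk ?h \<subseteq> blk P" using pb_mono[OF h pP] by auto
        then show False using nh Bh by auto
      qed
      then show ?thesis using compat_cc[OF pP compat[OF S P nh]] by auto
    qed
  qed
  show ?thesis using v pv av bv r by auto
qed

lemma vv_insert:
  assumes S: "S \<in> simplices n" and nle: "\<not> n \<le> card (Bs n S) + 1"
  shows "insert (vv n S) S \<in> simplices n"
  using sx_insert[OF S] vv_props[OF S nle] by auto

end


lemma card1_sub: "D \<noteq> {} \<Longrightarrow> D \<subseteq> X \<Longrightarrow> card X = 1 \<Longrightarrow> card D = 1"
proof -
  assume a: "D \<noteq> {}" "D \<subseteq> X" "card X = 1"
  obtain x where "X = {x}" using a(3) card_1_singletonE by blast
  then have "D = {x}" using a(1,2) by auto
  then show ?thesis by simp
qed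

lemma cycle_eq:
  fixes f :: "nat \<Rightarrow> 'a::order"
  assumes t: "0 < t" and st: "\<forall>i<t. f i \<le> f (Suc i mod t)"
  shows "\<forall>i<t. f i = f 0"
proof -
  have step: "f j \<le> f (Suc j)" if "Suc j < t" for j
    using st that by (metis Suc_lessD mod_less)
  have up: "f j \<le> f (j + k)" if "j + k < t" for j k
    using that
  proof (induction k)
    case 0 then show ?case by simp
  next
    case (Suc k)
    then have "f j \<le> f (j + k)" by simp
    also have "\<dots> \<le> f (Suc (j + k))" using step Suc.prems by simp
    finally show ?case by simp
  qed
  have last: "f (t - 1) \<le> f 0"
  proof -
    have "t - 1 < t" using t by simp
    then have "f (t - 1) \<le> f (Suc (t - 1) mod t)" using st by blast
    moreover have "Suc (t - 1) mod t = 0" using t by simp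
    ultimately show ?thesis by simp
  qed
  show ?thesis
  proof (intro allI impI)
    fix i assume i: "i < t"
    have "f 0 \<le> f i" using up[of 0 i] i by simp
    moreover have "f i \<le> f (t - 1)" using up[of i "t - 1 - i"] i by simp
    ultimately show "f i = f 0" using last by auto
  qed
qed

context L3 begin

lemma A_chain_inj:
  assumes S: "S \<in> simplices n" and SA: "S \<subseteq> A_set n"
  shows "inj_on (\<lambda>P. card (blk P)) S"
proof (rule inj_onI)
  fix P Q assume P: "P \<in> S" and Q: "Q \<in> S" and e: "card (blk P) = card (blk Q)"
  have pP: "P \<in> Pi_bar n" and pQ: "Q \<in> Pi_bar n" using sx_pb[OF S] P Q by auto
  have "blk P = blk Q"
  proof (cases "blk P \<subseteq> blk Q")
    case True then show ?thesis using card_subset_eq[OF pb_blk_fin[OF pQ]] e by auto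
  next
    case False
    then have "blk Q \<subseteq> blk P" using sx_blk[OF S P Q] by auto
    then show ?thesis using card_subset_eq[OF pb_blk_fin[OF pP]] e by auto
  qed
  then show "P = Q" using A_det SA P Q by (meson subsetD)
qed

lemma A_chain_img:
  assumes S: "S \<in> simplices n" and SA: "S \<subseteq> A_set n"
  shows "(\<lambda>P. card (blk P)) ` S \<subseteq> {2..n-1}"
proof
  fix k assume "k \<in> (\<lambda>P. card (blk P)) ` S"
  then obtain P where P: "P \<in> S" "k = card (blk P)" by auto
  have "P \<in> A_set n" using SA P by auto
  then have "2 \<le> k" "k < n" using A_card pb_blk_card A_pb P by auto
  then show "k \<in> {2..n-1}" by auto
qed

lemma card_range: "card {2..n-1} = n - 2"
  using n3 by simp

lemma C_char1:
  assumes S: "S \<in> simplices n" and le: "n \<le> card (Bs n S) + 1"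
  shows "S \<in> C_set n"
proof -
  let ?B = "Bs n S"
  have ne: "segm n S \<noteq> {}"
  proof
    assume "segm n S = {}"
    then have "?B = {1}" using Bs_empty by simp
    then show False using le n3 by simp
  qed
  obtain s where s: "s \<in> segm n S" "blk s = ?B" using Bs_max[OF S ne] by blast
  have sS: "s \<in> S" using segm_S[OF S s(1)] .
  have ps: "s \<in> Pi_bar n" using sx_pb[OF S sS] .
  have cB: "card ?B = n - 1" using pb_blk_card[OF ps] s(2) le by simp
  have Qk: "\<exists>Q\<in>S \<inter> A_set n. card (blk Q) = k \<and> blk Q \<subseteq> ?B" if k: "k \<in> {2..n-1}" for k
  proof -
    have "k \<in> {2..card (blk s)}" using k cB s(2) by simp
    then show ?thesis using s unfolding segm_def by auto
  qed
  have SA: "S \<subseteq> A_set n"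
  proof
    fix P assume P: "P \<in> S"
    have pP: "P \<in> Pi_bar n" using sx_pb[OF S P] .
    show "P \<in> A_set n"
      unfolding A_set_def
    proof (intro CollectI conjI ballI impI)
      show "P \<in> Pi_bar n" using pP .
      fix D assume D: "D \<in> P" "1 \<notin> D"
      have Dne: "D \<noteq> {}" using pb_ne[OF pP D(1)] .
      have "D \<noteq> blk P" using D(2) pb_blk[OF pP] by auto
      then have Ddj: "D \<inter> blk P = {}" using pb_disj[OF pP D(1)] pb_blk[OF pP] by auto
      have DN: "D \<subseteq> {1..n}" using pb_sub[OF pP D(1)] .
      have fbP: "finite (blk P)" using pb_blk_fin[OF pP] .
      have m1: "card (blk P) < n" using pb_blk_card[OF pP] .
      show "card D = 1"
      proof (cases "card (blk P) = n - 1")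
        case True
        have "card ({1..n} - blk P) = n - card (blk P)"
          using card_Diff_subset[OF fbP pb_blk_sub[OF pP]] by simp
        then have "card ({1..n} - blk P) = 1" using True n3 by simp
        moreover have "D \<subseteq> {1..n} - blk P" using DN Ddj by auto
        ultimately show ?thesis using card1_sub[OF Dne] by blast
      next
        case False
        have "blk P \<noteq> {}" using pb_blk[OF pP] by auto
        then have pos: "card (blk P) > 0" using fbP by (simp add: card_gt_0_iff)
        have "card (blk P) + 1 \<in> {2..n-1}"
          using m1 pos False by auto
        then obtain Q where Q: "Q \<in> S" "Q \<in> A_set n" "card (blk Q) = card (blk P) + 1"
          using Qk[of "card (blk P) + 1"] by auto
        have pQ: "Q \<in> Pi_bar n" using sx_pb[OF S Q(1)] .
        have "refines P Q"
        proof (rule ccontr)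
          assume "\<not> refines P Q"
          then have "refines Q P" using sx_cmp[OF S P Q(1)] by auto
          then have "blk Q \<subseteq> blk P" using pb_mono[OF pQ pP] by auto
          then have "card (blk Q) \<le> card (blk P)" using card_mono[OF fbP] by blast
          then show False using Q(3) by simp
        qed
        then have PQ: "blk P \<subseteq> blk Q" using pb_mono[OF pP pQ] by auto
        obtain F where F: "F \<in> Q" "D \<subseteq> F" using \<open>refines P Q\<close> D(1) unfolding refines_def by auto
        show ?thesis
        proof (cases "F = blk Q")
          case True
          have "card (blk Q - blk P) = card (blk Q) - card (blk P)"
            using card_Diff_subset[OF fbP PQ] by simp
          then have "card (blk Q - blk P) = 1" using Q(3) by simp
          moreover have "D \<subseteq> blk Q - blk P" using F True Ddj by auto
          ultimately show ?thesis using card1_sub[OF Dne] by blast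
        next
          case False
          then have "1 \<notin> F" using pb_blk_eq[OF pQ F(1)] by auto
          then have "card F = 1" using A_single[OF Q(2) F(1)] by simp
          then show ?thesis using card1_sub[OF Dne F(2)] by blast
        qed
      qed
    qed
  qed
  have img: "(\<lambda>P. card (blk P)) ` S = {2..n-1}"
  proof
    show "(\<lambda>P. card (blk P)) ` S \<subseteq> {2..n-1}" using A_chain_img[OF S SA] .
    show "{2..n-1} \<subseteq> (\<lambda>P. card (blk P)) ` S"
    proof
      fix k assume "k \<in> {2..n-1}"
      then obtain Q where "Q \<in> S" "card (blk Q) = k" using Qk by blast
      then show "k \<in> (\<lambda>P. card (blk P)) ` S" by force
    qed
  qed
  have "card S = card ((\<lambda>P. card (blk P)) ` S)" using card_image[OF A_chain_inj[OF S SA]] by simp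
  then have "card S = n - 2" using img card_range by simp
  then show ?thesis unfolding C_set_def using S SA by auto
qed

lemma C_char2:
  assumes C: "S \<in> C_set n"
  shows "n \<le> card (Bs n S) + 1"
proof -
  have S: "S \<in> simplices n" and cS: "card S = n - 2" and SA: "S \<subseteq> A_set n"
    using C unfolding C_set_def by auto
  let ?f = "\<lambda>P. card (blk P)"
  have "card (?f ` S) = n - 2" using card_image[OF A_chain_inj[OF S SA]] cS by simp
  then have img: "?f ` S = {2..n-1}"
    using card_subset_eq[OF _ A_chain_img[OF S SA]] card_range by simp
  have "n - 1 \<in> {2..n-1}" using n3 by simp
  then obtain P where P: "P \<in> S" "card (blk P) = n - 1" using img by (metis imageE)
  have pP: "P \<in> Pi_bar n" using sx_pb[OF S P(1)] .
  have "P \<in> segm n S"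
    unfolding segm_def
  proof (intro CollectI conjI ballI)
    show "P \<in> S \<inter> A_set n" using P SA by auto
    fix k assume k: "k \<in> {2..card (blk P)}"
    then have "k \<in> ?f ` S" using img P by simp
    then obtain Q where Q: "Q \<in> S" "card (blk Q) = k" by auto
    have pQ: "Q \<in> Pi_bar n" using sx_pb[OF S Q(1)] .
    have "blk Q \<subseteq> blk P"
    proof (cases "blk Q \<subseteq> blk P")
      case True then show ?thesis .
    next
      case False
      then have "blk P \<subseteq> blk Q" using sx_blk[OF S P(1) Q(1)] by auto
      moreover have "card (blk Q) \<le> card (blk P)" using Q k by simp
      ultimately have "blk P = blk Q" using card_subset_eq[OF pb_blk_fin[OF pQ]]
        card_mono[OF pb_blk_fin[OF pQ]] by (meson le_antisym)
      then show ?thesis by simp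
    qed
    then show "\<exists>Q\<in>S \<inter> A_set n. card (blk Q) = k \<and> blk Q \<subseteq> blk P" using Q SA by auto
  qed
  then have "blk P \<subseteq> Bs n S" using segm_blk[OF S] by simp
  then have "card (blk P) \<le> card (Bs n S)" using card_mono Bs_fin[OF S] by blast
  then show ?thesis using P(2) by simp
qed

lemma C_iff: "S \<in> simplices n \<Longrightarrow> S \<in> C_set n \<longleftrightarrow> n \<le> card (Bs n S) + 1"
  using C_char1 C_char2 by blast

end


context L3 begin

lemma empty_not_pb: "{} \<notin> Pi_bar n"
proof
  assume "{} \<in> Pi_bar n"
  then have "partition_on {1..n} {}" using pb by blast
  then have "\<Union>{} = {1..n}" using partition_onD1 by metis
  then show False using n3 by simp
qed

lemma empty_notin_sx: "S \<in> simplices n \<Longrightarrow> {} \<notin> S"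
  using sx_pb empty_not_pb by blast

lemma vv_empty: "n \<le> card (Bs n S) + 1 \<Longrightarrow> vv n S = {}"
  unfolding vv_def by simp

lemma vv_ne: "S \<in> simplices n \<Longrightarrow> vv n S \<in> S \<Longrightarrow> \<not> n \<le> card (Bs n S) + 1"
  using vv_empty empty_notin_sx by metis

lemma Hs_mono: "S \<subseteq> S' \<Longrightarrow> Bs n S = Bs n S' \<Longrightarrow> Hs n S \<subseteq> Hs n S'"
  unfolding Hs_def by auto

lemma vv_cong: "Bs n S = Bs n S' \<Longrightarrow> Hs n S = Hs n S' \<Longrightarrow> vv n S = vv n S'"
  unfolding vv_def by simp

lemma vv_toggle:
  assumes S: "S \<in> simplices n" and nle: "\<not> n \<le> card (Bs n S) + 1"
    and T: "insert (vv n S) T = insert (vv n S) S"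
  shows "Bs n T = Bs n S \<and> Hs n T = Hs n S \<and> vv n T = vv n S"
proof -
  let ?v = "vv n S"
  have vp: "?v \<notin> A_set n" "blk ?v = Bs n S" using vv_props[OF S nle] by auto
  have "T \<inter> A_set n = S \<inter> A_set n"
  proof
    show "T \<inter> A_set n \<subseteq> S \<inter> A_set n"
    proof
      fix x assume x: "x \<in> T \<inter> A_set n"
      then have "x \<in> insert ?v S" using T by blast
      moreover have "x \<noteq> ?v" using x vp(1) by auto
      ultimately show "x \<in> S \<inter> A_set n" using x by auto
    qed
    show "S \<inter> A_set n \<subseteq> T \<inter> A_set n"
    proof
      fix x assume x: "x \<in> S \<inter> A_set n"
      then have "x \<in> insert ?v T" using T by blast
      moreover have "x \<noteq> ?v" using x vp(1) by auto
      ultimately show "x \<in> T \<inter> A_set n" using x by auto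
    qed
  qed
  then have B: "Bs n T = Bs n S" using Bs_cong by metis
  have H: "Hs n T = Hs n S"
  proof
    show "Hs n T \<subseteq> Hs n S"
    proof
      fix x assume x: "x \<in> Hs n T"
      then have xT: "x \<in> T" and xB: "Bs n S \<subset> blk x" using B unfolding Hs_def by auto
      have "x \<noteq> ?v" using xB vp(2) by auto
      then have "x \<in> S" using xT T by blast
      then show "x \<in> Hs n S" using xB unfolding Hs_def by auto
    qed
    show "Hs n S \<subseteq> Hs n T"
    proof
      fix x assume x: "x \<in> Hs n S"
      then have xS: "x \<in> S" and xB: "Bs n S \<subset> blk x" unfolding Hs_def by auto
      have "x \<noteq> ?v" using xB vp(2) by auto
      then have "x \<in> T" using xS T by blast
      then show "x \<in> Hs n T" using xB B unfolding Hs_def by auto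
    qed
  qed
  show ?thesis using B H vv_cong[OF B H] by simp
qed

lemma sx_sub: "S \<in> simplices n \<Longrightarrow> T \<subseteq> S \<Longrightarrow> T \<noteq> {} \<Longrightarrow> T \<in> simplices n"
  unfolding simplices_def using finite_subset by blast

lemma matched_up:
  assumes S: "S \<in> simplices n" and nle: "\<not> n \<le> card (Bs n S) + 1"
    and vin: "vv n S \<in> S" and ns: "S \<noteq> {vv n S}"
  shows "(S - {vv n S}, S) \<in> MM n"
proof -
  let ?v = "vv n S"
  have ne: "S - {?v} \<noteq> {}" using vin ns by auto
  have sx2: "S - {?v} \<in> simplices n" using sx_sub[OF S _ ne] by auto
  have "insert ?v (S - {?v}) = insert ?v S" by auto
  then have "vv n (S - {?v}) = ?v" using vv_toggle[OF S nle] by blast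
  then show ?thesis unfolding MM_def using S sx2 vin by auto
qed

lemma matched_low:
  assumes S: "S \<in> simplices n" and nle: "\<not> n \<le> card (Bs n S) + 1"
    and vin: "vv n S \<notin> S"
  shows "(S, insert (vv n S) S) \<in> MM n"
proof -
  let ?v = "vv n S"
  have sx2: "insert ?v S \<in> simplices n" using vv_insert[OF S nle] .
  have "insert ?v (insert ?v S) = insert ?v S" by auto
  then have e: "vv n (insert ?v S) = ?v" using vv_toggle[OF S nle] by blast
  have "insert ?v S - {?v} = S" using vin by auto
  then show ?thesis unfolding MM_def using S sx2 e by auto
qed

lemma alpha_eq: "alpha n = {bB n {1}}"
proof -
  have "{1..n} - {1} = {2..n}" by auto
  then show ?thesis unfolding alpha_def bB_def by simp
qed

lemma alpha_props: "bB n {1} \<in> Pi_bar n" "bB n {1} \<notin> A_set n" "blk (bB n {1}) = {1}"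
  using bB_part[of "{1}"] n3 by auto

lemma alpha_sx: "alpha n \<in> simplices n"
  unfolding alpha_eq simplices_def using alpha_props refines_refl' by auto

lemma vv_alpha: "vv n (alpha n) = bB n {1}"
proof -
  let ?a = "bB n {1}"
  have "segm n {?a} = {}" using segm_sub[of n "{?a}"] alpha_props(2) by auto
  then have B: "Bs n {?a} = {1}" using Bs_empty by simp
  have H: "Hs n {?a} = {}" unfolding Hs_def using B alpha_props(3) by auto
  show ?thesis unfolding alpha_eq vv_def using B H n3 by simp
qed

lemma single_alpha:
  assumes S: "S \<in> simplices n" and nle: "\<not> n \<le> card (Bs n S) + 1" and e: "S = {vv n S}"
  shows "S = alpha n"
proof -
  obtain v where v: "v = vv n S" by blast
  have e': "S = {v}" using e[folded v] .
  have vp: "v \<notin> A_set n" "blk v = Bs n S" using vv_props[OF S nle, folded v] by auto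
  have "S \<inter> A_set n = {}" using vp(1) e' by simp
  then have "segm n S = {}" using segm_sub[of n S] by auto
  then have B: "Bs n S = {1}" using Bs_empty by simp
  have "Hs n S = {}" unfolding Hs_def using B vp(2) e' by auto
  then have "vv n S = bB n {1}" unfolding vv_def using B nle by simp
  then have "v = bB n {1}" using v by simp
  then show ?thesis using e' alpha_eq by simp
qed

end


context L3 begin

lemma MM_D:
  assumes "(a, b) \<in> MM n"
  shows "a \<in> simplices n" "b \<in> simplices n" "vv n b \<in> b" "a = b - {vv n b}" "vv n a = vv n b"
  using assms unfolding MM_def by auto

lemma crit_sub:
  assumes x: "x \<in> simplices n" and um: "\<forall>p\<in>MM n. x \<noteq> fst p \<and> x \<noteq> snd p"
  shows "x \<in> C_set n \<or> x = alpha n"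
proof (cases "n \<le> card (Bs n x) + 1")
  case True then show ?thesis using C_char1[OF x] by simp
next
  case nle: False
  show ?thesis
  proof (cases "vv n x \<in> x")
    case True
    show ?thesis
    proof (cases "x = {vv n x}")
      case True then show ?thesis using single_alpha[OF x nle] by simp
    next
      case False
      then have "(x - {vv n x}, x) \<in> MM n" using matched_up[OF x nle \<open>vv n x \<in> x\<close>] by simp
      then show ?thesis using um by fastforce
    qed
  next
    case False
    then have "(x, insert (vv n x) x) \<in> MM n" using matched_low[OF x nle] by simp
    then show ?thesis using um by fastforce
  qed
qed

lemma C_unmatched:
  assumes x: "x \<in> C_set n" and p: "(a, b) \<in> MM n"
  shows "x \<noteq> a \<and> x \<noteq> b"
proof -
  have "vv n x = {}" using vv_empty C_char2[OF x] by simp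
  moreover have "vv n b \<in> b" "vv n a = vv n b" "b \<in> simplices n" using MM_D[OF p] by auto
  moreover have "{} \<notin> b" using empty_notin_sx MM_D(2)[OF p] by blast
  ultimately show ?thesis by metis
qed

lemma alpha_unmatched:
  assumes p: "(a, b) \<in> MM n"
  shows "alpha n \<noteq> a \<and> alpha n \<noteq> b"
proof
  show "alpha n \<noteq> b"
  proof
    assume e: "alpha n = b"
    have "a = b - {vv n b}" using MM_D[OF p] by simp
    then have "a = {}" using e vv_alpha alpha_eq by auto
    moreover have "a \<in> simplices n" using MM_D[OF p] by simp
    ultimately show False unfolding simplices_def by auto
  qed
  show "alpha n \<noteq> a"
  proof
    assume e: "alpha n = a"
    have "vv n b = bB n {1}" using MM_D(5)[OF p] e vv_alpha by simp
    moreover have "a = b - {vv n b}" using MM_D[OF p] by simp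
    ultimately have nin: "bB n {1} \<notin> a" by auto
    have "a = {bB n {1}}" using e alpha_eq by simp
    then show False using nin by simp
  qed
qed

lemma critical_eq: "critical (simplices n) (MM n) = C_set n \<union> {alpha n}"
proof
  show "critical (simplices n) (MM n) \<subseteq> C_set n \<union> {alpha n}"
    unfolding critical_def using crit_sub by blast
  show "C_set n \<union> {alpha n} \<subseteq> critical (simplices n) (MM n)"
  proof
    fix x assume x: "x \<in> C_set n \<union> {alpha n}"
    have xs: "x \<in> simplices n" using x alpha_sx unfolding C_set_def by auto
    have "\<forall>p\<in>MM n. x \<noteq> fst p \<and> x \<noteq> snd p"
    proof
      fix p assume p: "p \<in> MM n"
      obtain a b where ab: "p = (a, b)" by (cases p)
      show "x \<noteq> fst p \<and> x \<noteq> snd p"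
        using x C_unmatched[of x a b] alpha_unmatched[of a b] p ab by auto
    qed
    then show "x \<in> critical (simplices n) (MM n)" unfolding critical_def using xs by auto
  qed
qed

lemma MM_pm: "partial_matching (simplices n) (\<subset>) (MM n)"
  unfolding partial_matching_def
proof (intro conjI ballI impI)
  fix p assume p: "p \<in> MM n"
  obtain a b where ab: "p = (a, b)" by (cases p)
  have d: "a \<in> simplices n" "b \<in> simplices n" "vv n b \<in> b" "a = b - {vv n b}"
    using MM_D p ab by auto
  have cov: "covers (simplices n) (\<subset>) a b"
    unfolding covers_def
  proof (intro conjI)
    show "a \<in> simplices n" "b \<in> simplices n" using d by auto
    show "a \<subset> b" using d by auto
    show "\<not> (\<exists>c\<in>simplices n. a \<subset> c \<and> c \<subset> b)"
    proof
      assume "\<exists>c\<in>simplices n. a \<subset> c \<and> c \<subset> b"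
      then obtain c where c: "a \<subset> c" "c \<subset> b" by blast
      then obtain y where y: "y \<in> c" "y \<notin> a" by blast
      then have "y = vv n b" using c d by auto
      then have "b \<subseteq> c" using c d y by auto
      then show False using c by auto
    qed
  qed
  then show "case p of (a, b) \<Rightarrow> covers (simplices n) (\<subset>) a b" using ab by simp
next
  fix p q assume p: "p \<in> MM n" and q: "q \<in> MM n" and pq: "p \<noteq> q"
  obtain a b where ab: "p = (a, b)" by (cases p)
  obtain a' b' where ab': "q = (a', b')" by (cases q)
  have d: "vv n b \<in> b" "a = b - {vv n b}" "vv n a = vv n b" using MM_D p ab by auto
  have d': "vv n b' \<in> b'" "a' = b' - {vv n b'}" "vv n a' = vv n b'" using MM_D q ab' by auto
  have na: "vv n a \<notin> a" using d by auto
  have na': "vv n a' \<notin> a'" using d' by auto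
  have b_eq: "b = insert (vv n a) a" using d by auto
  have b_eq': "b' = insert (vv n a') a'" using d' by auto
  have "a \<noteq> a'"
  proof
    assume "a = a'" then have "b = b'" using b_eq b_eq' by simp
    then show False using pq ab ab' \<open>a = a'\<close> by simp
  qed
  moreover have "b \<noteq> b'"
  proof
    assume "b = b'" then have "a = a'" using d d' by simp
    then show False using \<open>a \<noteq> a'\<close> by simp
  qed
  moreover have "a \<noteq> b'"
  proof
    assume e: "a = b'" then have "vv n a \<in> a" using d' by simp
    then show False using na by simp
  qed
  moreover have "b \<noteq> a'"
  proof
    assume e: "b = a'" then have "vv n a' \<in> a'" using d by simp
    then show False using na' by simp
  qed
  ultimately show "{fst p, snd p} \<inter> {fst q, snd q} = {}" using ab ab' by auto
qed

lemma MM_upper: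
  assumes p: "(a, b) \<in> MM n"
  shows "Bs n a = Bs n b \<and> Hs n a = Hs n b"
proof -
  have d: "b \<in> simplices n" "vv n b \<in> b" "a = b - {vv n b}" using MM_D[OF p] by auto
  have nle: "\<not> n \<le> card (Bs n b) + 1" using vv_ne[OF d(1,2)] .
  have "insert (vv n b) a = insert (vv n b) b" using d by auto
  from vv_toggle[OF d(1) nle this] show ?thesis by simp
qed

lemma MM_acyclic: "acyclic_matching (simplices n) (\<subset>) (MM n)"
  unfolding acyclic_matching_def
proof (intro conjI notI)
  show "partial_matching (simplices n) (\<subset>) (MM n)" using MM_pm .
  assume "\<exists>(t::nat) (a::nat \<Rightarrow> simplex) (b::nat \<Rightarrow> simplex). t \<ge> 2 \<and> inj_on b {..<t} \<and>
          (\<forall>i<t. (a i, b i) \<in> MM n \<and> a i \<subset> b (Suc i mod t))"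
  then obtain t a b where t: "t \<ge> 2" and inj: "inj_on b {..<t}"
    and cyc: "\<forall>i<t. (a i, b i) \<in> MM n \<and> a i \<subset> b (Suc i mod t)" by blast
  have t0: "0 < t" using t by simp
  have sm: "Suc i mod t < t" for i using t0 by simp
  have ci: "(a i, b i) \<in> MM n" "a i \<subseteq> b (Suc i mod t)" if "i < t" for i
    using cyc that by auto
  have BH: "Bs n (a i) = Bs n (b i) \<and> Hs n (a i) = Hs n (b i)" if "i < t" for i
    using MM_upper[OF ci(1)[OF that]] .
  have f1: "\<forall>i<t. Bs n (b i) \<le> Bs n (b (Suc i mod t))"
  proof (intro allI impI)
    fix i assume i: "i < t"
    have "Bs n (a i) \<subseteq> Bs n (b (Suc i mod t))" using Bs_mono[OF ci(2)[OF i]] .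
    then show "Bs n (b i) \<le> Bs n (b (Suc i mod t))" using BH[OF i] by simp
  qed
  have e1: "\<forall>i<t. Bs n (b i) = Bs n (b 0)" using cycle_eq[OF t0 f1] .
  have f2: "\<forall>i<t. Hs n (b i) \<le> Hs n (b (Suc i mod t))"
  proof (intro allI impI)
    fix i assume i: "i < t"
    have x1: "Bs n (b i) = Bs n (b 0)" using e1[rule_format, OF i] .
    have x2: "Bs n (b (Suc i mod t)) = Bs n (b 0)" using e1[rule_format, OF sm[of i]] .
    have "Bs n (a i) = Bs n (b (Suc i mod t))" using BH[OF i] x1 x2 by simp
    then have "Hs n (a i) \<subseteq> Hs n (b (Suc i mod t))" using Hs_mono[OF ci(2)[OF i]] by simp
    then show "Hs n (b i) \<le> Hs n (b (Suc i mod t))" using BH[OF i] by simp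
  qed
  have e2: "\<forall>i<t. Hs n (b i) = Hs n (b 0)" using cycle_eq[OF t0 f2] .
  have e3: "vv n (b i) = vv n (b 0)" if "i < t" for i
  proof -
    have "Bs n (b i) = Bs n (b 0)" "Hs n (b i) = Hs n (b 0)"
      using e1[rule_format, OF that] e2[rule_format, OF that] by auto
    then show ?thesis by (rule vv_cong)
  qed
  have f3: "\<forall>i<t. b i \<le> b (Suc i mod t)"
  proof (intro allI impI)
    fix i assume i: "i < t"
    have d: "vv n (b i) \<in> b i" "a i = b i - {vv n (b i)}" using MM_D[OF ci(1)[OF i]] by auto
    have d2: "vv n (b (Suc i mod t)) \<in> b (Suc i mod t)" using MM_D[OF ci(1)[OF sm[of i]]] by auto
    have "vv n (b (Suc i mod t)) = vv n (b i)" using e3[OF i] e3[OF sm[of i]] by simp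
    then have "vv n (b i) \<in> b (Suc i mod t)" using d2 by simp
    moreover have "b i \<subseteq> insert (vv n (b i)) (a i)" using d by auto
    ultimately show "b i \<le> b (Suc i mod t)" using ci(2)[OF i] by blast
  qed
  have "\<forall>i<t. b i = b 0" using cycle_eq[OF t0 f3] .
  then have "b 1 = b 0" using t by (metis One_nat_def Suc_1 Suc_le_lessD)
  moreover have "(1::nat) \<in> {..<t}" "(0::nat) \<in> {..<t}" using t by auto
  ultimately have "(1::nat) = 0" using inj_onD[OF inj] by blast
  then show False by simp
qed

end


definition im :: "(nat \<Rightarrow> nat) \<Rightarrow> partition \<Rightarrow> partition" where
  "im h P = (\<lambda>B. h ` B) ` P"

lemma act_im: "act_simplex h S = im h ` S"
  unfolding act_simplex_def im_def by simp

lemma inj_im: "inj h \<Longrightarrow> inj (im h)"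
proof -
  assume h: "inj h"
  have i1: "inj (\<lambda>B. h ` B)" by (rule injI) (use inj_image_eq_iff[OF h] in simp)
  show ?thesis unfolding im_def by (rule injI) (use inj_image_eq_iff[OF i1] in simp)
qed

lemma blk_im: "inj h \<Longrightarrow> h 1 = 1 \<Longrightarrow> blk (im h P) = h ` blk P"
proof -
  assume h: "inj h" "h 1 = 1"
  have m: "1 \<in> h ` D \<longleftrightarrow> 1 \<in> D" for D using inj_image_mem_iff[OF h(1), of 1 D] h(2) by simp
  have "{B \<in> im h P. 1 \<in> B} = (\<lambda>B. h ` B) ` {D \<in> P. 1 \<in> D}" unfolding im_def using m by auto
  then show ?thesis unfolding blk_def by auto
qed

lemma refines_im: "inj h \<Longrightarrow> refines (im h P) (im h Q) \<longleftrightarrow> refines P Q"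
  unfolding refines_def im_def by (auto simp: inj_image_subset_iff)

lemma im_inv: "bij h \<Longrightarrow> im (inv h) (im h P) = P"
proof -
  assume b: "bij h"
  have "inv h ` h ` B = B" for B using b by (simp add: bij_is_inj image_inv_f_f)
  then show ?thesis unfolding im_def by (simp add: image_image)
qed

lemma stab_props:
  assumes "h \<in> stab1 n"
  shows "inj h" "bij h" "h 1 = 1" "h ` {1..n} = {1..n}" "inv h \<in> stab1 n"
proof -
  have p: "h permutes {1..n}" "h 1 = 1" using assms unfolding stab1_def by auto
  show "inj h" using permutes_inj[OF p(1)] .
  show "bij h" using permutes_bij[OF p(1)] .
  show "h 1 = 1" using p(2) .
  show "h ` {1..n} = {1..n}" using permutes_image[OF p(1)] .
  have "inv h 1 = 1" using permutes_inv_eq[OF p(1)] p(2) by simp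
  then show "inv h \<in> stab1 n" unfolding stab1_def using permutes_inv[OF p(1)] by simp
qed

context L3 begin

lemma pb_im1:
  assumes h: "h \<in> stab1 n" and P: "P \<in> Pi_bar n"
  shows "im h P \<in> Pi_bar n"
proof -
  note hp = stab_props[OF h]
  have pP: "partition_on {1..n} P" using pb[OF P] .
  have "partition_on (h ` {1..n}) ((`) h ` P - {{}})"
    using partition_on_inj_image[OF pP inj_on_subset[OF hp(1) subset_UNIV]] .
  moreover have "(`) h ` P - {{}} = im h P"
  proof -
    have "{} \<notin> (`) h ` P" using pb_ne[OF P] by auto
    then show ?thesis unfolding im_def by blast
  qed
  ultimately have part: "partition_on {1..n} (im h P)" using hp(4) by simp
  have ii: "inj (im h)" using inj_im[OF hp(1)] .
  have d: "im h ((\<lambda>i. {i}) ` {1..n}) = (\<lambda>i. {i}) ` {1..n}"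
  proof -
    have "im h ((\<lambda>i. {i}) ` {1..n}) = (\<lambda>i. {i}) ` (h ` {1..n})" unfolding im_def by (simp add: image_image)
    then show ?thesis using hp(4) by simp
  qed
  have t: "im h {{1..n}} = {{1..n}}" unfolding im_def using hp(4) by simp
  have "im h P \<noteq> (\<lambda>i. {i}) ` {1..n}"
  proof
    assume "im h P = (\<lambda>i. {i}) ` {1..n}"
    then have "im h P = im h ((\<lambda>i. {i}) ` {1..n})" using d by simp
    then have "P = (\<lambda>i. {i}) ` {1..n}" using ii by (simp add: inj_eq)
    then show False using pb_not_disc[OF P] by simp
  qed
  moreover have "im h P \<noteq> {{1..n}}"
  proof
    assume "im h P = {{1..n}}"
    then have "im h P = im h {{1..n}}" using t by simp
    then have "P = {{1..n}}" using ii by (simp add: inj_eq)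
    then show False using pb_not_top[OF P] by simp
  qed
  ultimately show ?thesis unfolding Pi_bar_def using part by simp
qed

lemma A_im1:
  assumes h: "h \<in> stab1 n" and P: "P \<in> A_set n"
  shows "im h P \<in> A_set n"
proof -
  note hp = stab_props[OF h]
  have "im h P \<in> Pi_bar n" using pb_im1[OF h A_pb[OF P]] .
  moreover have "\<forall>B\<in>im h P. 1 \<notin> B \<longrightarrow> card B = 1"
  proof (intro ballI impI)
    fix B assume B: "B \<in> im h P" "1 \<notin> B"
    then obtain D where D: "D \<in> P" "B = h ` D" unfolding im_def by auto
    have "1 \<notin> D" using B(2) D(2) hp(3) by (metis imageI)
    then have "card D = 1" using A_single[OF P D(1)] by simp
    then show "card B = 1" using D(2) card_image[OF inj_on_subset[OF hp(1) subset_UNIV]] by simp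
  qed
  ultimately show ?thesis unfolding A_set_def by simp
qed

lemma pb_im: "h \<in> stab1 n \<Longrightarrow> im h P \<in> Pi_bar n \<longleftrightarrow> P \<in> Pi_bar n"
  using pb_im1[of h P] pb_im1[of "inv h" "im h P"] stab_props[of h] im_inv[of h P] by auto

lemma A_im: "h \<in> stab1 n \<Longrightarrow> im h P \<in> A_set n \<longleftrightarrow> P \<in> A_set n"
  using A_im1[of h P] A_im1[of "inv h" "im h P"] stab_props[of h] im_inv[of h P] by auto

lemma sx_im:
  assumes h: "h \<in> stab1 n" and S: "S \<in> simplices n"
  shows "im h ` S \<in> simplices n"
proof -
  note hp = stab_props[OF h]
  have "im h ` S \<subseteq> Pi_bar n" using sx_pb[OF S] pb_im[OF h] by auto
  moreover have "\<forall>P\<in>im h ` S. \<forall>Q\<in>im h ` S. refines P Q \<or> refines Q P"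
    using sx_cmp[OF S] refines_im[OF hp(1)] by auto
  ultimately show ?thesis using sx[OF S] unfolding simplices_def by auto
qed

lemma card_blk_im: "h \<in> stab1 n \<Longrightarrow> card (blk (im h P)) = card (blk P)"
  using blk_im[of h P] stab_props[of h] card_image[OF inj_on_subset[OF _ subset_UNIV], of h "blk P"] by simp

lemma blk_sub_im: "h \<in> stab1 n \<Longrightarrow> blk (im h Q) \<subseteq> blk (im h P) \<longleftrightarrow> blk Q \<subseteq> blk P"
  using blk_im[of h] stab_props[of h] by (simp add: inj_image_subset_iff)

lemma segm_im:
  assumes h: "h \<in> stab1 n"
  shows "segm n (im h ` S) = im h ` segm n S"
proof
  note hp = stab_props[OF h]
  show "segm n (im h ` S) \<subseteq> im h ` segm n S"
  proof
    fix x assume x: "x \<in> segm n (im h ` S)"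
    then obtain P where P: "P \<in> S" "x = im h P" unfolding segm_def by auto
    have PA: "P \<in> A_set n" using x P A_im[OF h] unfolding segm_def by auto
    have "\<forall>k\<in>{2..card (blk P)}. \<exists>Q\<in>S \<inter> A_set n. card (blk Q) = k \<and> blk Q \<subseteq> blk P"
    proof
      fix k assume k: "k \<in> {2..card (blk P)}"
      then have "k \<in> {2..card (blk x)}" using P card_blk_im[OF h] by simp
      then obtain Q' where Q': "Q' \<in> im h ` S \<inter> A_set n" "card (blk Q') = k" "blk Q' \<subseteq> blk x"
        using x unfolding segm_def by blast
      then obtain Q where Q: "Q \<in> S" "Q' = im h Q" by auto
      have "Q \<in> A_set n" using Q' Q A_im[OF h] by auto
      moreover have "card (blk Q) = k" using Q' Q card_blk_im[OF h] by simp
      moreover have "blk Q \<subseteq> blk P" using Q' Q P blk_sub_im[OF h] by simp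
      ultimately show "\<exists>Q\<in>S \<inter> A_set n. card (blk Q) = k \<and> blk Q \<subseteq> blk P" using Q by auto
    qed
    then have "P \<in> segm n S" unfolding segm_def using P PA by auto
    then show "x \<in> im h ` segm n S" using P by auto
  qed
  show "im h ` segm n S \<subseteq> segm n (im h ` S)"
  proof
    fix x assume x: "x \<in> im h ` segm n S"
    then obtain P where P: "P \<in> segm n S" "x = im h P" by auto
    have PS: "P \<in> S" "P \<in> A_set n" using P segm_sub by auto
    have "\<forall>k\<in>{2..card (blk x)}. \<exists>Q\<in>im h ` S \<inter> A_set n. card (blk Q) = k \<and> blk Q \<subseteq> blk x"
    proof
      fix k assume k: "k \<in> {2..card (blk x)}"
      then have "k \<in> {2..card (blk P)}" using P card_blk_im[OF h] by simp
      then obtain Q where Q: "Q \<in> S \<inter> A_set n" "card (blk Q) = k" "blk Q \<subseteq> blk P"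
        using P unfolding segm_def by blast
      have "im h Q \<in> im h ` S \<inter> A_set n" using Q A_im[OF h] by auto
      moreover have "card (blk (im h Q)) = k" using Q card_blk_im[OF h] by simp
      moreover have "blk (im h Q) \<subseteq> blk x" using Q P blk_sub_im[OF h] by simp
      ultimately show "\<exists>Q\<in>im h ` S \<inter> A_set n. card (blk Q) = k \<and> blk Q \<subseteq> blk x" by blast
    qed
    moreover have "x \<in> im h ` S \<inter> A_set n" using P PS A_im[OF h] by auto
    ultimately show "x \<in> segm n (im h ` S)" unfolding segm_def by auto
  qed
qed

lemma Bs_im:
  assumes h: "h \<in> stab1 n"
  shows "Bs n (im h ` S) = h ` Bs n S"
proof -
  note hp = stab_props[OF h]
  have "Bs n (im h ` S) = insert 1 (\<Union>(blk ` im h ` segm n S))" unfolding Bs_def segm_im[OF h] ..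
  also have "\<dots> = insert 1 (\<Union>P\<in>segm n S. h ` blk P)" using blk_im[OF hp(1) hp(3)] by (simp add: image_image)
  also have "\<dots> = h ` Bs n S" unfolding Bs_def using hp(3) by (simp add: image_Union image_image)
  finally show ?thesis .
qed

lemma Hs_im:
  assumes h: "h \<in> stab1 n"
  shows "Hs n (im h ` S) = im h ` Hs n S"
proof -
  note hp = stab_props[OF h]
  have "Bs n (im h ` S) \<subset> blk (im h P) \<longleftrightarrow> Bs n S \<subset> blk P" for P
    unfolding Bs_im[OF h] blk_im[OF hp(1) hp(3)] using hp(1)
    by (simp add: inj_image_subset_iff inj_image_eq_iff psubset_eq)
  moreover have "{x \<in> im h ` S. Bs n (im h ` S) \<subset> blk x} = im h ` {P \<in> S. Bs n (im h ` S) \<subset> blk (im h P)}"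
    by auto
  ultimately show ?thesis unfolding Hs_def by simp
qed

lemma minH_unique:
  assumes S: "S \<in> simplices n" and X: "X \<subseteq> S" and m: "m \<in> X" "\<forall>Q\<in>X. refines m Q"
  shows "minH X = m"
proof -
  have ne: "X \<noteq> {}" using m by auto
  have mp: "minH X \<in> X" "\<forall>Q\<in>X. refines (minH X) Q" using minH_props[OF S X ne] by auto
  have a: "minH X \<in> Pi_bar n" "m \<in> Pi_bar n" using sx_pb[OF S] X mp(1) m(1) by auto
  have "refines (minH X) m" "refines m (minH X)" using mp m by auto
  then show ?thesis using refines_antisym[OF pb[OF a(1)] pb[OF a(2)]] by blast
qed

lemma minH_im:
  assumes h: "h \<in> stab1 n" and S: "S \<in> simplices n" and X: "X \<subseteq> S" "X \<noteq> {}"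
  shows "minH (im h ` X) = im h (minH X)"
proof -
  note hp = stab_props[OF h]
  have mp: "minH X \<in> X" "\<forall>Q\<in>X. refines (minH X) Q" using minH_props[OF S X] by auto
  show ?thesis
  proof (rule minH_unique[OF sx_im[OF h S]])
    show "im h ` X \<subseteq> im h ` S" using X by auto
    show "im h (minH X) \<in> im h ` X" using mp by auto
    show "\<forall>Q\<in>im h ` X. refines (im h (minH X)) Q" using mp refines_im[OF hp(1)] by auto
  qed
qed

lemma bB_im: "h \<in> stab1 n \<Longrightarrow> bB n (h ` B) = im h (bB n B)"
  unfolding bB_def im_def using stab_props[of h] by (simp add: image_set_diff)

lemma cc_im: "h \<in> stab1 n \<Longrightarrow> cc (h ` B) (im h m) = im h (cc B m)"
proof -
  assume h: "h \<in> stab1 n"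
  note hp = stab_props[OF h]
  have ii: "inj (im h)" using inj_im[OF hp(1)] .
  have e1: "im h m - {h ` blk m} = (\<lambda>B. h ` B) ` (m - {blk m})"
  proof -
    have i2: "inj (\<lambda>B. h ` B)" by (rule injI) (use inj_image_eq_iff[OF hp(1)] in simp)
    show ?thesis unfolding im_def using image_set_diff[OF i2, of m "{blk m}"] by simp
  qed
  show ?thesis unfolding cc_def blk_im[OF hp(1) hp(3)]
    using e1 hp(1) by (simp add: im_def image_set_diff)
qed

lemma vv_im:
  assumes h: "h \<in> stab1 n" and S: "S \<in> simplices n"
  shows "vv n (im h ` S) = im h (vv n S)"
proof -
  note hp = stab_props[OF h]
  have cB: "card (Bs n (im h ` S)) = card (Bs n S)"
    unfolding Bs_im[OF h] using card_image[OF inj_on_subset[OF hp(1) subset_UNIV]] by simp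
  have He: "Hs n (im h ` S) = {} \<longleftrightarrow> Hs n S = {}" unfolding Hs_im[OF h] by simp
  show ?thesis
  proof (cases "n \<le> card (Bs n S) + 1")
    case True then show ?thesis unfolding vv_def using cB by (simp add: im_def)
  next
    case F1: False
    show ?thesis
    proof (cases "Hs n S = {}")
      case True then show ?thesis unfolding vv_def using cB He F1 Bs_im[OF h] bB_im[OF h] by simp
    next
      case False
      have HS: "Hs n S \<subseteq> S" unfolding Hs_def by auto
      have "minH (Hs n (im h ` S)) = im h (minH (Hs n S))"
        unfolding Hs_im[OF h] using minH_im[OF h S HS False] .
      then show ?thesis unfolding vv_def using cB He F1 False Bs_im[OF h] cc_im[OF h] by simp
    qed
  qed
qed

lemma MM_im:
  assumes h: "h \<in> stab1 n" and p: "(a, b) \<in> MM n"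
  shows "(im h ` a, im h ` b) \<in> MM n"
proof -
  note hp = stab_props[OF h]
  have d: "a \<in> simplices n" "b \<in> simplices n" "vv n b \<in> b" "a = b - {vv n b}" "vv n a = vv n b"
    using MM_D[OF p] by auto
  have ii: "inj (im h)" using inj_im[OF hp(1)] .
  have v1: "vv n (im h ` b) = im h (vv n b)" using vv_im[OF h d(2)] .
  have v2: "vv n (im h ` a) = im h (vv n a)" using vv_im[OF h d(1)] .
  have "im h ` a = im h ` b - {im h (vv n b)}" using d(4) image_set_diff[OF ii] by simp
  then show ?thesis unfolding MM_def using sx_im[OF h d(1)] sx_im[OF h d(2)] d(3,5) v1 v2 by auto
qed

end

theorem proposition11:
  fixes n :: nat
  assumes "n \<ge> 3"
  shows "\<exists>M. acyclic_matching (simplices n) (\<subset>) M \<and>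
             (\<forall>h\<in>stab1 n. \<forall>(a,b)\<in>M. (act_simplex h a, act_simplex h b) \<in> M) \<and>
             critical (simplices n) M = C_set n \<union> {alpha n}"
proof -
  interpret L3 n using assms by unfold_locales
  show ?thesis
  proof (intro exI[of _ "MM n"] conjI)
    show "acyclic_matching (simplices n) (\<subset>) (MM n)" by (rule MM_acyclic)
    show "\<forall>h\<in>stab1 n. \<forall>(a,b)\<in>MM n. (act_simplex h a, act_simplex h b) \<in> MM n"
      unfolding act_im using MM_im by blast
    show "critical (simplices n) (MM n) = C_set n \<union> {alpha n}" by (rule critical_eq)
  qed
qed

end
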